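(* Assume $\operatorname{rank}(X)=n$ and that $\xi_r(\varpi^N)<1/2$ for some $r\in\{0,\ldots,N\}$; set $r^*(\varpi^N)=\max\{r\in\{0,\ldots,N\}:\xi_r(\varpi^N)<1/2\}$. Suppose there exists $\tilde A\in\mathbb{R}^{n\times s}$ with pairwise distinct columns such that $\min_{i\in\mathbb{S}}|I_i(\tilde A)|\ge s\,\nu_n(X)$ and $\|\phi(\tilde A)\|_0\le r^*(\varpi^N)$. Then $\Psi(\varpi^N)=\{\mathrm{set}(\tilde A)\}$.
   Context: Data: integers $n,s,N\ge1$ and a dataset $\varpi^N=((x_1,y_1),\ldots,(x_N,y_N))$ with $x_t\in\mathbb{R}^n$, $y_t\in\mathbb{R}$; $X=[x_1\ \cdots\ x_N]\in\mathbb{R}^{n\times N}$. Let $\mathbb{T}=\{1,\ldots,N\}$, $\mathbb{S}=\{1,\ldots,s\}$. For $A=[a_1\ \cdots\ a_s]\in\mathbb{R}^{n\times s}$, $\mathrm{set}(A)=\{a_1,\ldots,a_s\}$; $\sigma_A:\mathbb{T}\to\mathbb{S}$ is a switching signal satisfying $\sigma_A(t)\in\arg\min_{i\in\mathbb{S}}|y_t-x_t^\top a_i|$ for all $t$, selected uniquely by a fixed rule depending only on $A$ and the data (among all admissible choices, one maximizing $\min_{i}|I_i(A)|$, ties then broken by assigning the smallest admissible index). $I_i(A)=\{t\in\mathbb{T}:\sigma_A(t)=i\}$. $\phi(A)=\big(y_1-x_1^\top a_{\sigma_A(1)},\ldots,y_N-x_N^\top a_{\sigma_A(N)}\big)^\top$,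 $\mathcal{J}(A)=\|\phi(A)\|_1=\sum_t\min_i|y_t-a_i^\top x_t|$, and $\phi_{\mathcal{T}}(A)$ its subvector indexed by $\mathcal{T}\subset\mathbb{T}$. $\|w\|_0$ is the number of nonzero entries. The LSM estimator is $\Psi(\varpi^N)=\{\mathrm{set}(\hat A):\hat A\in\arg\min_{A\in\mathbb{R}^{n\times s}}\mathcal{J}(A)\}$. The $r$-th concentration ratio is $$\xi_r(\varpi^N)=\sup\Big\{\frac{\|\phi_{\mathcal{T}}(A)-\phi_{\mathcal{T}}(A')\|_1}{\|\phi(A)-\phi(A')\|_1}: A,A'\in\mathbb{R}^{n\times s},\ \mathcal{T}\subset\mathbb{T},\ \phi(A)\ne\phi(A'),\ |\mathcal{T}|\le r\Big\}.$$ Genericity index: for $\operatorname{rank}(X)=n$, $\nu_n(X)$ is the smallest integer $m$ such that every submatrix $X_{\mathcal{S}}$ formed by $m$ columns of $X$ ($\mathcal{S}\subset\mathbb{T}$, $|\mathcal{S}|=m$) has rank $n$. *)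

theory Defs
  imports "HOL-Analysis.Analysis"
begin

text \<open>Data points are given as two lists xs (regressors in real^'n, so
n = CARD('n)) and ys (outputs) of common length N; time indices are 0..<N.
A parameter matrix A in R^(n x s) is a list of s columns; mode indices are 0..<s.
A switching signal is a list of length N of mode indices.\<close>

definition residual :: "(real^'n) list \<Rightarrow> real list \<Rightarrow> (real^'n) list \<Rightarrow> nat \<Rightarrow> nat \<Rightarrow> real" where
  "residual xs ys A t i = ys ! t - (xs ! t) \<bullet> (A ! i)"

definition admissible_sig :: "(real^'n) list \<Rightarrow> real list \<Rightarrow> nat \<Rightarrow> (real^'n) list \<Rightarrow> nat list set" where
  "admissible_sig xs ys s A = {\<sigma>. length \<sigma> = length xs \<and>
     (\<forall>t<length xs. \<sigma> ! t < s \<and>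
        (\<forall>i<s. \<bar>residual xs ys A t (\<sigma> ! t)\<bar> \<le> \<bar>residual xs ys A t i\<bar>))}"

definition mode_set :: "nat list \<Rightarrow> nat \<Rightarrow> nat set" where
  "mode_set \<sigma> i = {t. t < length \<sigma> \<and> \<sigma> ! t = i}"

definition sig_score :: "nat \<Rightarrow> nat list \<Rightarrow> nat" where
  "sig_score s \<sigma> = Min ((\<lambda>i. card (mode_set \<sigma> i)) ` {0..<s})"

definition best_sig :: "(real^'n) list \<Rightarrow> real list \<Rightarrow> nat \<Rightarrow> (real^'n) list \<Rightarrow> nat list set" where
  "best_sig xs ys s A = {\<sigma> \<in> admissible_sig xs ys s A.
      \<forall>\<sigma>' \<in> admissible_sig xs ys s A. sig_score s \<sigma>' \<le> sig_score s \<sigma>}"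

text \<open>The fixed selection rule: among admissible signals maximizing min_i |I_i|,
the lexicographically least one (smallest admissible index first).\<close>
definition sig :: "(real^'n) list \<Rightarrow> real list \<Rightarrow> nat \<Rightarrow> (real^'n) list \<Rightarrow> nat list" where
  "sig xs ys s A = (THE \<sigma>. \<sigma> \<in> best_sig xs ys s A \<and>
      (\<forall>\<sigma>' \<in> best_sig xs ys s A. \<sigma>' \<noteq> \<sigma> \<longrightarrow> (\<sigma>, \<sigma>') \<in> lexord {(a, b). a < b}))"

definition I_set :: "(real^'n) list \<Rightarrow> real list \<Rightarrow> nat \<Rightarrow> (real^'n) list \<Rightarrow> nat \<Rightarrow> nat set" where
  "I_set xs ys s A i = mode_set (sig xs ys s A) i"

definition phi :: "(real^'n) list \<Rightarrow> real list \<Rightarrow> nat \<Rightarrow> (real^'n) list \<Rightarrow> nat \<Rightarrow> real" where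
  "phi xs ys s A t = residual xs ys A t (sig xs ys s A ! t)"

definition Jcost :: "(real^'n) list \<Rightarrow> real list \<Rightarrow> nat \<Rightarrow> (real^'n) list \<Rightarrow> real" where
  "Jcost xs ys s A = (\<Sum>t<length xs. \<bar>phi xs ys s A t\<bar>)"

definition Psi :: "(real^'n) list \<Rightarrow> real list \<Rightarrow> nat \<Rightarrow> (real^'n) set set" where
  "Psi xs ys s = {set Ah | Ah. length Ah = s \<and>
      (\<forall>A. length A = s \<longrightarrow> Jcost xs ys s Ah \<le> Jcost xs ys s A)}"

definition xi :: "(real^'n) list \<Rightarrow> real list \<Rightarrow> nat \<Rightarrow> nat \<Rightarrow> real" where
  "xi xs ys s r = Sup {(\<Sum>t\<in>T. \<bar>phi xs ys s A t - phi xs ys s A' t\<bar>) /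
                       (\<Sum>t<length xs. \<bar>phi xs ys s A t - phi xs ys s A' t\<bar>) | A A' T.
        length A = s \<and> length A' = s \<and> T \<subseteq> {0..<length xs} \<and>
        (\<exists>t<length xs. phi xs ys s A t \<noteq> phi xs ys s A' t) \<and> card T \<le> r}"

definition r_star :: "(real^'n) list \<Rightarrow> real list \<Rightarrow> nat \<Rightarrow> nat" where
  "r_star xs ys s = Max {r. r \<le> length xs \<and> xi xs ys s r < 1/2}"

definition rankX :: "(real^'n) list \<Rightarrow> nat" where
  "rankX xs = dim (set xs)"

definition nu :: "(real^'n) list \<Rightarrow> nat" where
  "nu xs = (LEAST m. \<forall>S. S \<subseteq> {0..<length xs} \<and> card S = m \<longrightarrow>
              dim ((\<lambda>t. xs ! t) ` S) = CARD('n))"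

definition l0 :: "(real^'n) list \<Rightarrow> real list \<Rightarrow> nat \<Rightarrow> (real^'n) list \<Rightarrow> nat" where
  "l0 xs ys s A = card {t. t < length xs \<and> phi xs ys s A t \<noteq> 0}"

end

theory Submission imports Defs begin

lemma finite_least_rel:
  assumes "finite S" "S \<noteq> {}" "trans R"
    and tot: "\<And>x y. x \<in> S \<Longrightarrow> y \<in> S \<Longrightarrow> (x,y) \<in> R \<or> x = y \<or> (y,x) \<in> R"
  shows "\<exists>x\<in>S. \<forall>y\<in>S. y \<noteq> x \<longrightarrow> (x,y) \<in> R"
  using assms(1,2) tot
proof (induction S rule: finite_ne_induct)
  case (singleton x) then show ?case by auto
next
  case (insert a F)
  then obtain x where x: "x \<in> F" "\<forall>y\<in>F. y \<noteq> x \<longrightarrow> (x,y) \<in> R" by auto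
  show ?case
  proof (cases "(a,x) \<in> R")
    case True
    then show ?thesis using x \<open>trans R\<close> by (auto dest: transD)
  next
    case False
    with insert.prems[of x a] x insert.hyps have "(x,a) \<in> R" by auto
    then show ?thesis using x by auto
  qed
qed

lemma sig_adm:
  assumes "s \<ge> 1"
  shows "sig xs ys s A \<in> admissible_sig xs ys s A"
proof -
  let ?Adm = "admissible_sig xs ys s A"
  let ?R = "lexord {(a::nat, b). a < b}"
  have "\<forall>t. \<exists>i. i < s \<and> (\<forall>j<s. \<bar>residual xs ys A t i\<bar> \<le> \<bar>residual xs ys A t j\<bar>)"
  proof
    fix t
    let ?M = "Min ((\<lambda>i. \<bar>residual xs ys A t i\<bar>) ` {0..<s})"
    have ne: "{0..<s} \<noteq> {}" using assms by auto
    have "?M \<in> (\<lambda>i. \<bar>residual xs ys A t i\<bar>) ` {0..<s}" using ne by (intro Min_in) auto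
    then obtain i where "i < s" "\<bar>residual xs ys A t i\<bar> = ?M" by auto
    moreover have "\<forall>j<s. ?M \<le> \<bar>residual xs ys A t j\<bar>" by (auto intro: Min_le)
    ultimately show "\<exists>i. i < s \<and> (\<forall>j<s. \<bar>residual xs ys A t i\<bar> \<le> \<bar>residual xs ys A t j\<bar>)" by auto
  qed
  then obtain f where f: "\<And>t. f t < s \<and> (\<forall>j<s. \<bar>residual xs ys A t (f t)\<bar> \<le> \<bar>residual xs ys A t j\<bar>)"
    by metis
  have "map f [0..<length xs] \<in> ?Adm" using f unfolding admissible_sig_def by auto
  hence adm_ne: "?Adm \<noteq> {}" by auto
  have adm_fin: "finite ?Adm"
    by (rule finite_subset[OF _ finite_lists_length_eq[OF finite_atLeastLessThan, of 0 s "length xs"]])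
       (auto simp: admissible_sig_def in_set_conv_nth)
  define M where "M = Max (sig_score s ` ?Adm)"
  have "M \<in> sig_score s ` ?Adm" unfolding M_def using adm_ne adm_fin by (intro Max_in) auto
  then obtain \<sigma>0 where "\<sigma>0 \<in> ?Adm" "sig_score s \<sigma>0 = M" by auto
  moreover have "\<forall>\<sigma>'\<in>?Adm. sig_score s \<sigma>' \<le> M" unfolding M_def using adm_fin by auto
  ultimately have "\<sigma>0 \<in> best_sig xs ys s A" unfolding best_sig_def by auto
  hence best_ne: "best_sig xs ys s A \<noteq> {}" by auto
  have best_sub: "best_sig xs ys s A \<subseteq> ?Adm" unfolding best_sig_def by auto
  have best_fin: "finite (best_sig xs ys s A)" using finite_subset[OF best_sub adm_fin] .
  have trR: "trans ?R" by (rule lexord_transI) (auto simp: trans_def)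
  have totR: "\<And>x y. (x,y) \<in> ?R \<or> x = y \<or> (y,x) \<in> ?R" by (rule lexord_linear) auto
  have irR: "\<And>x. (x,x) \<notin> ?R" by (rule lexord_irreflexive) auto
  obtain x where x: "x \<in> best_sig xs ys s A" "\<forall>y\<in>best_sig xs ys s A. y \<noteq> x \<longrightarrow> (x,y) \<in> ?R"
    using finite_least_rel[OF best_fin best_ne trR totR] by blast
  have "\<exists>!\<sigma>. \<sigma> \<in> best_sig xs ys s A \<and>
      (\<forall>\<sigma>' \<in> best_sig xs ys s A. \<sigma>' \<noteq> \<sigma> \<longrightarrow> (\<sigma>, \<sigma>') \<in> ?R)"
  proof (rule ex1I[of _ x])
    show "x \<in> best_sig xs ys s A \<and> (\<forall>\<sigma>' \<in> best_sig xs ys s A. \<sigma>' \<noteq> x \<longrightarrow> (x, \<sigma>') \<in> ?R)" using x by auto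
  next
    fix y assume y: "y \<in> best_sig xs ys s A \<and> (\<forall>\<sigma>' \<in> best_sig xs ys s A. \<sigma>' \<noteq> y \<longrightarrow> (y, \<sigma>') \<in> ?R)"
    show "y = x"
    proof (rule ccontr)
      assume "y \<noteq> x"
      hence "(x,y) \<in> ?R" "(y,x) \<in> ?R" using x y by auto
      hence "(x,x) \<in> ?R" using trR by (auto dest: transD)
      thus False using irR by auto
    qed
  qed
  hence "sig xs ys s A \<in> best_sig xs ys s A" unfolding sig_def by (rule theI'[THEN conjunct1])
  thus ?thesis using best_sub by auto
qed


lemma div_le_1_aux: "0 \<le> (a::real) \<Longrightarrow> b \<le> a \<Longrightarrow> b / a \<le> 1"
  by (cases "a = 0") (auto simp: divide_le_eq_1)

lemma phi_len_sig:
  assumes "s \<ge> 1"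
  shows "length (sig xs ys s A) = length xs" "\<And>t. t < length xs \<Longrightarrow> sig xs ys s A ! t < s"
  using sig_adm[OF assms, of xs ys A] unfolding admissible_sig_def by auto

lemma J_strict:
  fixes xs :: "(real^'n) list"
  assumes xi: "xi xs ys s r < 1/2" and l0: "l0 xs ys s At \<le> r"
    and len: "length A = s" "length At = s"
    and diff: "\<exists>t<length xs. phi xs ys s A t \<noteq> phi xs ys s At t"
  shows "Jcost xs ys s At < Jcost xs ys s A"
proof -
  let ?N = "length xs"
  define p where "p = phi xs ys s At"
  define q where "q = phi xs ys s A"
  define T where "T = {t. t < ?N \<and> p t \<noteq> 0}"
  define D where "D = (\<Sum>t<?N. \<bar>q t - p t\<bar>)"
  define DT where "DT = (\<Sum>t\<in>T. \<bar>q t - p t\<bar>)"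
  have Tsub: "T \<subseteq> {0..<?N}" unfolding T_def by auto
  have cardT: "card T \<le> r" using l0 unfolding l0_def T_def p_def by simp
  obtain t0 where t0: "t0 < ?N" "q t0 \<noteq> p t0" using diff unfolding p_def q_def by auto
  have "0 < \<bar>q t0 - p t0\<bar>" using t0 by auto
  also have "\<dots> \<le> D" unfolding D_def using t0 by (intro member_le_sum) auto
  finally have Dpos: "D > 0" .
  have DTD: "DT \<le> D" unfolding DT_def D_def using Tsub
    by (intro sum_mono2) (auto simp: atLeast0LessThan)
  let ?S = "{(\<Sum>t\<in>T. \<bar>phi xs ys s A t - phi xs ys s A' t\<bar>) /
                       (\<Sum>t<length xs. \<bar>phi xs ys s A t - phi xs ys s A' t\<bar>) | A A' T.
        length A = s \<and> length A' = s \<and> T \<subseteq> {0..<length xs} \<and>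
        (\<exists>t<length xs. phi xs ys s A t \<noteq> phi xs ys s A' t) \<and> card T \<le> r}"
  have mem: "DT / D \<in> ?S" unfolding DT_def D_def p_def q_def
    using len Tsub diff cardT by blast
  have bdd: "bdd_above ?S"
  proof (rule bdd_aboveI[of _ 1])
    fix x assume "x \<in> ?S"
    then obtain B B' U where x: "x = (\<Sum>t\<in>U. \<bar>phi xs ys s B t - phi xs ys s B' t\<bar>) /
                       (\<Sum>t<length xs. \<bar>phi xs ys s B t - phi xs ys s B' t\<bar>)"
      and U: "U \<subseteq> {0..<length xs}" by blast
    have "(\<Sum>t\<in>U. \<bar>phi xs ys s B t - phi xs ys s B' t\<bar>) \<le> (\<Sum>t<length xs. \<bar>phi xs ys s B t - phi xs ys s B' t\<bar>)"
      using U by (intro sum_mono2) (auto simp: atLeast0LessThan)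
    moreover have "0 \<le> (\<Sum>t<length xs. \<bar>phi xs ys s B t - phi xs ys s B' t\<bar>)" by (intro sum_nonneg) auto
    ultimately show "x \<le> 1" unfolding x
      using div_le_1_aux by blast
  qed
  have "DT / D \<le> xi xs ys s r" unfolding xi_def using mem bdd by (rule cSup_upper)
  with xi have "DT / D < 1/2" by linarith
  hence DT2: "2 * DT < D" using Dpos by (simp add: field_simps)
  have pw: "\<And>t. t < ?N \<Longrightarrow> \<bar>q t\<bar> \<ge> \<bar>p t\<bar> + \<bar>q t - p t\<bar> - 2 * (if t \<in> T then \<bar>q t - p t\<bar> else 0)"
    unfolding T_def by auto
  have "(\<Sum>t<?N. \<bar>p t\<bar> + \<bar>q t - p t\<bar> - 2 * (if t \<in> T then \<bar>q t - p t\<bar> else 0)) \<le> (\<Sum>t<?N. \<bar>q t\<bar>)"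
    using pw by (intro sum_mono) auto
  moreover have "(\<Sum>t<?N. (if t \<in> T then \<bar>q t - p t\<bar> else 0)) = DT"
  proof -
    have "(\<Sum>t<?N. (if t \<in> T then \<bar>q t - p t\<bar> else 0)) = (\<Sum>t\<in>{..<?N} \<inter> T. \<bar>q t - p t\<bar>)"
      by (simp add: sum.inter_restrict)
    also have "{..<?N} \<inter> T = T" unfolding T_def by auto
    finally show ?thesis unfolding DT_def .
  qed
  ultimately have "(\<Sum>t<?N. \<bar>p t\<bar>) + D - 2 * DT \<le> (\<Sum>t<?N. \<bar>q t\<bar>)"
    unfolding D_def by (simp add: sum.distrib sum_subtractf sum_distrib_left[symmetric])
  thus ?thesis using DT2 unfolding Jcost_def p_def q_def by linarith
qed

lemma J_ge:
  fixes xs :: "(real^'n) list"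
  assumes xi: "xi xs ys s r < 1/2" and l0: "l0 xs ys s At \<le> r"
    and len: "length A = s" "length At = s"
  shows "Jcost xs ys s At \<le> Jcost xs ys s A"
  using J_strict[OF assms]
  by (cases "\<exists>t<length xs. phi xs ys s A t \<noteq> phi xs ys s At t") (auto simp: Jcost_def intro!: sum.cong eq_refl)


lemma nu_prop:
  fixes xs :: "(real^'n) list"
  shows "\<forall>S. S \<subseteq> {0..<length xs} \<and> card S = nu xs \<longrightarrow> dim ((\<lambda>t. xs ! t) ` S) = CARD('n)"
proof -
  have "\<forall>S. S \<subseteq> {0..<length xs} \<and> card S = Suc (length xs) \<longrightarrow> dim ((\<lambda>t. xs ! t) ` S) = CARD('n)"
  proof (intro allI impI)
    fix S assume "S \<subseteq> {0..<length xs} \<and> card S = Suc (length xs)"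
    hence "card S \<le> length xs" "card S = Suc (length xs)" using card_mono[of "{0..<length xs}" S] by auto
    thus "dim ((\<lambda>t. xs ! t) ` S) = CARD('n)" by simp
  qed
  thus ?thesis unfolding nu_def by (rule LeastI)
qed

lemma span_full:
  fixes V :: "(real^'n) set"
  assumes "dim V = CARD('n)"
  shows "span V = UNIV"
  using assms dim_eq_full by (metis DIM_cart DIM_real mult.right_neutral)

lemma cols_sub:
  fixes xs :: "(real^'n) list"
  assumes s1: "s \<ge> 1" and len: "length A = s" "length At = s"
    and card: "\<forall>i<s. card (I_set xs ys s At i) \<ge> s * nu xs"
    and eq: "\<forall>t<length xs. phi xs ys s A t = phi xs ys s At t"
  shows "set At \<subseteq> set A"
proof
  fix a assume "a \<in> set At"
  then obtain i where i: "i < s" "a = At ! i" using len by (auto simp: in_set_conv_nth)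
  let ?N = "length xs"
  define I where "I = I_set xs ys s At i"
  define K where "K j = {t. t < ?N \<and> sig xs ys s A ! t = j}" for j
  have Isub: "I \<subseteq> {0..<?N}" unfolding I_def I_set_def mode_set_def using phi_len_sig(1)[OF s1, of xs ys At] by auto
  have "I \<subseteq> (\<Union>j\<in>{0..<s}. I \<inter> K j)" using Isub phi_len_sig(2)[OF s1, of _ xs ys A] unfolding K_def by auto
  hence "card I \<le> card (\<Union>j\<in>{0..<s}. I \<inter> K j)" by (intro card_mono) (auto simp: K_def)
  also have "\<dots> \<le> (\<Sum>j\<in>{0..<s}. card (I \<inter> K j))" by (rule card_UN_le) auto
  finally have cI: "card I \<le> (\<Sum>j\<in>{0..<s}. card (I \<inter> K j))" .
  have "\<exists>j<s. card (I \<inter> K j) \<ge> nu xs"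
  proof (rule ccontr)
    assume neg: "\<not> ?thesis"
    have "nu xs \<noteq> 0"
    proof
      assume "nu xs = 0" thus False using neg s1 by auto
    qed
    hence lt: "\<And>j. j \<in> {0..<s} \<Longrightarrow> card (I \<inter> K j) \<le> nu xs - 1" "nu xs \<ge> 1"
      using neg by fastforce+
    have "(\<Sum>j\<in>{0..<s}. card (I \<inter> K j)) \<le> s * (nu xs - 1)"
      using sum_bounded_above[of "{0..<s}" "\<lambda>j. card (I \<inter> K j)", OF lt(1)] by simp
    moreover have "s * nu xs \<le> card I" using card i unfolding I_def by auto
    ultimately have "s * nu xs \<le> s * (nu xs - 1)" using cI by linarith
    moreover have "s * 1 \<le> s * nu xs" using lt(2) by (intro mult_le_mono2)
    ultimately have "s * nu xs \<le> s * nu xs - s" "s \<le> s * nu xs" by (simp_all add: diff_mult_distrib2)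
    thus False using s1 by linarith
  qed
  then obtain j where j: "j < s" "card (I \<inter> K j) \<ge> nu xs" by blast
  then obtain S where S: "S \<subseteq> I \<inter> K j" "card S = nu xs" by (meson obtain_subset_with_card_n)
  have "S \<subseteq> {0..<?N}" using S Isub by auto
  hence "dim ((\<lambda>t. xs ! t) ` S) = CARD('n)" using nu_prop[of xs] S by blast
  hence sp: "span ((\<lambda>t. xs ! t) ` S) = UNIV" by (rule span_full)
  define d where "d = A ! j - At ! i"
  have orth: "orthogonal d y" if hy: "y \<in> (\<lambda>t. xs ! t) ` S" for y
  proof -
    obtain t where t: "t \<in> S" "y = xs ! t" using hy by auto
    have tN: "t < ?N" and sA: "sig xs ys s A ! t = j" and sAt: "sig xs ys s At ! t = i"
      using t S unfolding K_def I_def I_set_def mode_set_def by auto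
    have "phi xs ys s A t = phi xs ys s At t" using eq tN by auto
    hence "ys ! t - xs ! t \<bullet> A ! j = ys ! t - xs ! t \<bullet> At ! i"
      unfolding phi_def residual_def sA sAt .
    hence "xs ! t \<bullet> d = 0" unfolding d_def by (simp add: inner_diff_right)
    thus ?thesis unfolding orthogonal_def t by (simp add: inner_commute)
  qed
  have "d \<in> span ((\<lambda>t. xs ! t) ` S)" using sp by simp
  hence "orthogonal d d" using orthogonal_to_span[of d "(\<lambda>t. xs ! t) ` S" d] orth by blast
  hence "d = 0" by (simp add: orthogonal_def)
  hence "a = A ! j" unfolding d_def i by simp
  thus "a \<in> set A" using j len by auto
qed

lemma Psi_D:
  fixes xs :: "(real^'n) list"
  assumes "B \<in> Psi xs ys s"
  shows "\<exists>Ah. B = set Ah \<and> length Ah = s \<and> (\<forall>A. length A = s \<longrightarrow> Jcost xs ys s Ah \<le> Jcost xs ys s A)"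
  using assms unfolding Psi_def by blast

theorem theorem1:
  fixes xs :: "(real^'n) list" and ys :: "real list" and s :: nat and At :: "(real^'n) list"
  assumes "length xs \<ge> 1" and "length ys = length xs" and "s \<ge> 1"
    and "rankX xs = CARD('n)"
    and "\<exists>r \<le> length xs. xi xs ys s r < 1/2"
    and "length At = s" and "distinct At"
    and "\<forall>i<s. card (I_set xs ys s At i) \<ge> s * nu xs"
    and "l0 xs ys s At \<le> r_star xs ys s"
  shows "Psi xs ys s = {set At}"
proof -
  let ?r = "r_star xs ys s"
  have "?r \<in> {r. r \<le> length xs \<and> xi xs ys s r < 1/2}"
    unfolding r_star_def using assms(5) by (intro Max_in) auto
  hence xir: "xi xs ys s ?r < 1/2" by simp
  have min: "\<And>A. length A = s \<Longrightarrow> Jcost xs ys s At \<le> Jcost xs ys s A"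
    using J_ge[OF xir assms(9) _ assms(6)] by blast
  have "set At \<in> Psi xs ys s" unfolding Psi_def using min assms(6) by blast
  moreover have "B = set At" if hB: "B \<in> Psi xs ys s" for B
  proof -
    obtain Ah where Ah: "B = set Ah" "length Ah = s" "\<forall>A. length A = s \<longrightarrow> Jcost xs ys s Ah \<le> Jcost xs ys s A"
      using Psi_D[OF hB] by blast
    have eq: "\<forall>t<length xs. phi xs ys s Ah t = phi xs ys s At t"
    proof (rule ccontr)
      assume "\<not> ?thesis"
      hence "Jcost xs ys s At < Jcost xs ys s Ah" using J_strict[OF xir assms(9) Ah(2) assms(6)] by blast
      thus False using Ah(3) assms(6) by force
    qed
    have sub: "set At \<subseteq> set Ah" using cols_sub[OF assms(3) Ah(2) assms(6) assms(8) eq] .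
    have "card (set At) = s" using assms(6,7) distinct_card by blast
    moreover have "card (set Ah) \<le> s" using Ah(2) card_length by metis
    ultimately have "set At = set Ah" using sub by (intro card_seteq) auto
    thus ?thesis using Ah(1) by simp
  qed
  ultimately show ?thesis by blast
qed

end
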